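(* Let $L\in\mathbb{N}_+$ and $n_0,n_1,\dots,n_L\in\mathbb{N}_+$. Define the binomial bound $$\beta=\big\|B_{n_L}M_{n_{L-1},n_L}\cdots B_{n_1}M_{n_0,n_1}e_{n_0+1}\big\|_1$$ and the Montúfar bound $\mu=\prod_{l=1}^{L}\sum_{j=0}^{\min(n_0,\dots,n_{l-1})}\binom{n_l}{j}$. Then $\beta\le\mu$, and $\beta<\mu$ if and only if there exists $l\in\{1,\dots,L-1\}$ with $n_l<\min(n_0,\dots,n_l)+\min(n_0,\dots,n_{l+1})$.
   Context: $V$ denotes sequences $(v_j)_{j\in\mathbb{N}}$ (indexed from $0$) of nonnegative integers with finite sum; ${\rm e}_k\in V$ has $({\rm e}_k)_j=\delta_{kj}$. Clipping: $\mathrm{cl}_{i^*}(v)_i=v_i$ for $i<i^*$, $\sum_{j\ge i^*}v_j$ for $i=i^*$, $0$ for $i>i^*$. For $n\in\mathbb{N}_+$, $k\in\{0,\dots,n\}$ let $\gamma_{k,n}=\sum_{j=0}^{k}\binom{n}{j}{\rm e}_{n-j}$, and let $B_n\in\mathbb{N}^{(n+1)\times(n+1)}$ be given by $(B_n)_{a,b}=(\mathrm{cl}_{b-1}(\gamma_{b-1,n}))_{a-1}$, $a,b\in\{1,\dots,n+1\}$. For $n,n'\in\mathbb{N}$, the connector matrix $M_{n,n'}\in\mathbb{R}^{(n'+1)\times(n+1)}$ has entries $(M_{n,n'})_{a,b}=\delta_{a,\min(b,n'+1)}$. $e_{n_0+1}\in\mathbb{R}^{n_0+1}$ is the standard unit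 vector with $1$ in the last position; $\|\cdot\|_1$ is the sum of absolute values of entries. *)

theory Defs
  imports "Jordan_Normal_Form.Matrix"
begin

text \<open>Elements of V: functions nat => nat (finitely supported ones are the relevant ones).\<close>

definition unitV :: "nat \<Rightarrow> nat \<Rightarrow> nat" where
  "unitV k = (\<lambda>j. if j = k then 1 else 0)"

definition clip :: "nat \<Rightarrow> (nat \<Rightarrow> nat) \<Rightarrow> nat \<Rightarrow> nat" where
  "clip i v = (\<lambda>j. if j < i then v j
                  else if j = i then (\<Sum>k \<in> {k. i \<le> k \<and> v k \<noteq> 0}. v k)
                  else 0)"

definition gammaV :: "nat \<Rightarrow> nat \<Rightarrow> nat \<Rightarrow> nat" where
  "gammaV k n = (\<lambda>i. \<Sum>j\<le>k. (n choose j) * unitV (n - j) i)"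

text \<open>B_n, 0-indexed: entry (a,b) with a,b in {0..n} is (cl_b(gamma_{b,n}))_a.\<close>
definition Bmat :: "nat \<Rightarrow> real mat" where
  "Bmat n = mat (n+1) (n+1) (\<lambda>(a,b). real (clip b (gammaV b n) a))"

definition Mmat :: "nat \<Rightarrow> nat \<Rightarrow> real mat" where
  "Mmat n n' = mat (n'+1) (n+1) (\<lambda>(a,b). if a = min b n' then 1 else 0)"

fun chainMat :: "(nat \<Rightarrow> nat) \<Rightarrow> nat \<Rightarrow> real mat" where
  "chainMat ns 0 = 1\<^sub>m (ns 0 + 1)"
| "chainMat ns (Suc l) = Bmat (ns (Suc l)) * Mmat (ns l) (ns (Suc l)) * chainMat ns l"

definition norm1 :: "real vec \<Rightarrow> real" where
  "norm1 v = (\<Sum>i<dim_vec v. \<bar>v $ i\<bar>)"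

definition binomBound :: "(nat \<Rightarrow> nat) \<Rightarrow> nat \<Rightarrow> real" where
  "binomBound ns L = norm1 (chainMat ns L *\<^sub>v unit_vec (ns 0 + 1) (ns 0))"

definition montufarBound :: "(nat \<Rightarrow> nat) \<Rightarrow> nat \<Rightarrow> nat" where
  "montufarBound ns L = (\<Prod>l=1..L. \<Sum>j\<le>Min (ns ` {..<l}). ns l choose j)"

end

theory Submission
  imports Defs
begin


fun wv :: "(nat\<Rightarrow>nat) \<Rightarrow> nat \<Rightarrow> nat \<Rightarrow> real" where
  "wv ns 0 = (\<lambda>i. if i = ns 0 then 1 else 0)"
| "wv ns (Suc l) = (\<lambda>a. \<Sum>b<ns (Suc l)+1. real (clip b (gammaV b (ns (Suc l))) a) *
      (\<Sum>c<ns l+1. (if b = min c (ns (Suc l)) then 1 else 0) * wv ns l c))"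

lemma chain_carrier: "chainMat ns l \<in> carrier_mat (ns l + 1) (ns 0 + 1)"
  by (induction l) (auto simp: Bmat_def Mmat_def)

lemma Mmat_vec: "Mmat n n' *\<^sub>v vec (n+1) w =
   vec (n'+1) (\<lambda>b. \<Sum>c<n+1. (if b = min c n' then 1 else 0) * w c)"
  by (rule eq_vecI) (auto simp: Mmat_def scalar_prod_def atLeast0LessThan)

lemma Bmat_vec: "Bmat n *\<^sub>v vec (n+1) u =
   vec (n+1) (\<lambda>a. \<Sum>b<n+1. real (clip b (gammaV b n) a) * u b)"
  by (rule eq_vecI) (auto simp: Bmat_def scalar_prod_def atLeast0LessThan)

lemma chain_vec: "chainMat ns l *\<^sub>v unit_vec (ns 0 + 1) (ns 0) = vec (ns l + 1) (wv ns l)"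
proof (induction l)
  case 0
  then show ?case by (auto simp: unit_vec_def)
next
  case (Suc l)
  have C: "chainMat ns l \<in> carrier_mat (ns l + 1) (ns 0 + 1)" by (rule chain_carrier)
  have B: "Bmat (ns (Suc l)) \<in> carrier_mat (ns (Suc l)+1) (ns (Suc l)+1)" by (simp add: Bmat_def)
  have M: "Mmat (ns l) (ns (Suc l)) \<in> carrier_mat (ns (Suc l)+1) (ns l+1)" by (simp add: Mmat_def)
  have BM: "Bmat (ns (Suc l)) * Mmat (ns l) (ns (Suc l)) \<in> carrier_mat (ns (Suc l)+1) (ns l+1)"
    using B M by auto
  have "chainMat ns (Suc l) *\<^sub>v unit_vec (ns 0 + 1) (ns 0)
      = (Bmat (ns (Suc l)) * Mmat (ns l) (ns (Suc l))) *\<^sub>v (chainMat ns l *\<^sub>v unit_vec (ns 0 + 1) (ns 0))"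
    using assoc_mult_mat_vec[OF BM C] by simp
  also have "\<dots> = Bmat (ns (Suc l)) *\<^sub>v (Mmat (ns l) (ns (Suc l)) *\<^sub>v vec (ns l + 1) (wv ns l))"
    using Suc assoc_mult_mat_vec[OF B M] by simp
  also have "\<dots> = vec (ns (Suc l) + 1) (wv ns (Suc l))"
    by (simp only: Mmat_vec Bmat_vec wv.simps)
  finally show ?case .
qed

definition S :: "nat \<Rightarrow> nat \<Rightarrow> nat" where "S n d = (\<Sum>j\<le>d. n choose j)"

lemma gamma_zero: "i > n \<Longrightarrow> gammaV b n i = 0"
  by (auto simp: gammaV_def unitV_def)

lemma gamma_val: "i \<le> n \<Longrightarrow> gammaV b n i = (if n - i \<le> b then n choose (n - i) else 0)"
proof -
  assume i: "i \<le> n"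
  have "gammaV b n i = (\<Sum>j\<le>b. if j = n - i then n choose j else 0)"
    unfolding gammaV_def unitV_def
    by (rule sum.cong) (use i in auto)
  also have "\<dots> = (if n - i \<le> b then n choose (n - i) else 0)"
    by (subst sum.delta) auto
  finally show ?thesis .
qed

lemma clip_at: assumes "\<And>i. i > n \<Longrightarrow> v i = 0" "b \<le> n"
  shows "clip b v b = (\<Sum>k\<in>{b..n}. v k)"
proof -
  have "clip b v b = (\<Sum>k \<in> {k. b \<le> k \<and> v k \<noteq> 0}. v k)" by (simp add: clip_def)
  also have "\<dots> = (\<Sum>k\<in>{b..n}. v k)"
  proof (rule sum.mono_neutral_left)
    show "{k. b \<le> k \<and> v k \<noteq> 0} \<subseteq> {b..n}"
    proof
      fix k assume "k \<in> {k. b \<le> k \<and> v k \<noteq> 0}"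
      then have "b \<le> k" "v k \<noteq> 0" by auto
      then have "k \<le> n" using assms(1)[of k] by (cases "k > n") auto
      then show "k \<in> {b..n}" using \<open>b \<le> k\<close> by auto
    qed
  qed auto
  finally show ?thesis .
qed

lemma clip_colsum: assumes "\<And>i. i > n \<Longrightarrow> v i = 0" "b \<le> n"
  shows "(\<Sum>a<n+1. clip b v a) = (\<Sum>a<n+1. v a)"
proof -
  have d: "{..<n+1} = {..<b} \<union> {b..n}" using assms(2) by auto
  have d2: "{b..n} = insert b {b<..n}" using assms(2) by auto
  have "(\<Sum>a<n+1. clip b v a) = (\<Sum>a<b. clip b v a) + (\<Sum>a\<in>{b..n}. clip b v a)"
    unfolding d by (rule sum.union_disjoint) auto
  also have "(\<Sum>a\<in>{b..n}. clip b v a) = clip b v b"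
    unfolding d2 by (simp add: clip_def)
  also have "(\<Sum>a<b. clip b v a) = (\<Sum>a<b. v a)" by (simp add: clip_def)
  also have "clip b v b = (\<Sum>k\<in>{b..n}. v k)" by (rule clip_at[OF assms])
  also have "(\<Sum>a<b. v a) + (\<Sum>k\<in>{b..n}. v k) = (\<Sum>a<n+1. v a)"
    unfolding d by (rule sum.union_disjoint[symmetric]) auto
  finally show ?thesis .
qed

lemma gamma_sum: "(\<Sum>i<n+1. gammaV b n i) = S n b"
proof -
  have "(\<Sum>i<n+1. gammaV b n i) = (\<Sum>j\<le>b. (n choose j) * (\<Sum>i<n+1. unitV (n - j) i))"
    unfolding gammaV_def by (subst sum.swap) (simp only: sum_distrib_left)
  also have "\<dots> = (\<Sum>j\<le>b. (n choose j))"
    by (rule sum.cong) (auto simp: unitV_def)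
  finally show ?thesis by (simp add: S_def)
qed

lemma B_colsum: "b \<le> n \<Longrightarrow> (\<Sum>a<n+1. clip b (gammaV b n) a) = S n b"
  using clip_colsum[of n "gammaV b n" b] gamma_zero gamma_sum by auto

lemma B_pos: assumes "b \<le> n"
  shows "clip b (gammaV b n) a > 0 \<longleftrightarrow> a = b \<or> (a < b \<and> n - b \<le> a)"
proof (cases "a < b")
  case True
  then have "clip b (gammaV b n) a = gammaV b n a" by (simp add: clip_def)
  also have "\<dots> = (if n - a \<le> b then n choose (n - a) else 0)"
    using True assms by (simp add: gamma_val)
  finally show ?thesis using True assms by auto
next
  case False
  show ?thesis
  proof (cases "a = b")
    case True
    have "clip b (gammaV b n) b = (\<Sum>k\<in>{b..n}. gammaV b n k)"
      by (rule clip_at[OF _ assms]) (simp add: gamma_zero)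
    also have "\<dots> \<ge> gammaV b n n"
      by (rule member_le_sum) (use assms in auto)
    finally have "clip b (gammaV b n) b \<ge> 1" by (simp add: gamma_val)
    then show ?thesis using True by auto
  next
    case False
    then show ?thesis using \<open>\<not> a < b\<close> by (simp add: clip_def)
  qed
qed

lemma B_zero: "a > b \<Longrightarrow> clip b v a = 0" by (simp add: clip_def)

lemma S_min: "S n d = S n (min d n)"
proof -
  have "S n d = (\<Sum>j\<in>{..min d n}. n choose j)"
    unfolding S_def by (rule sum.mono_neutral_right) auto
  then show ?thesis by (simp add: S_def)
qed

lemma S_mono: "d \<le> d' \<Longrightarrow> S n d \<le> S n d'"
  unfolding S_def by (rule sum_mono2) auto

lemma S_strict: assumes "d < d'" "d < n" shows "S n d < S n d'"
proof -
  have "S n d < S n d + (n choose (Suc d))" using assms by simp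
  also have "\<dots> = S n (Suc d)" by (simp add: S_def)
  also have "\<dots> \<le> S n d'" using assms by (intro S_mono) auto
  finally show ?thesis .
qed

lemma S_pos: "S n d \<ge> 1"
proof -
  have "(n choose 0) \<le> S n d" unfolding S_def by (rule member_le_sum) auto
  then show ?thesis by simp
qed

lemma S_cmp: assumes "d \<le> m"
  shows "S n d \<le> S n m" and "S n d < S n m \<longleftrightarrow> min d n < min m n"
proof -
  show "S n d \<le> S n m" using assms by (rule S_mono)
  show "S n d < S n m \<longleftrightarrow> min d n < min m n"
  proof
    assume h: "S n d < S n m"
    show "min d n < min m n"
    proof (rule ccontr)
      assume "\<not> min d n < min m n"
      then have "min d n = min m n" using assms by (simp add: min_def split: if_splits)
      then have "S n d = S n m" using S_min[of n d] S_min[of n m] by simp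
      then show False using h by simp
    qed
  next
    assume "min d n < min m n"
    then have "S n (min d n) < S n (min m n)" by (intro S_strict) auto
    then show "S n d < S n m" using S_min[of n d] S_min[of n m] by simp
  qed
qed

declare sum.lessThan_Suc[simp del] lessThan_Suc[simp del]

definition mm :: "(nat \<Rightarrow> nat) \<Rightarrow> nat \<Rightarrow> nat" where "mm ns l = Min (ns ` {..l})"

lemma mm_0: "mm ns 0 = ns 0" by (simp add: mm_def)

lemma mm_Suc: "mm ns (Suc l) = min (mm ns l) (ns (Suc l))"
proof -
  have "{..Suc l} = insert (Suc l) {..l}" by auto
  then show ?thesis unfolding mm_def by (simp add: min.commute)
qed

lemma mm_le: "mm ns l \<le> ns l" unfolding mm_def by (rule Min_le) auto

lemma wv_nonneg: "wv ns l a \<ge> 0"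
  by (induction l arbitrary: a) (auto intro!: sum_nonneg mult_nonneg_nonneg)

lemma wv_supp: "wv ns l a \<noteq> 0 \<Longrightarrow> a \<le> mm ns l"
proof (induction l arbitrary: a)
  case 0
  then show ?case by (auto simp: mm_0 split: if_splits)
next
  case (Suc l)
  let ?n = "ns (Suc l)"
  from Suc.prems obtain b where b: "b < ?n + 1"
    and t: "real (clip b (gammaV b ?n) a) *
      (\<Sum>c<ns l+1. (if b = min c ?n then 1 else 0) * wv ns l c) \<noteq> 0"
    by (auto elim: sum.not_neutral_contains_not_neutral)
  from t have "clip b (gammaV b ?n) a \<noteq> 0" by auto
  then have ab: "a \<le> b" using B_zero[of b a] by (cases "a > b") auto
  from t have "(\<Sum>c<ns l+1. (if b = min c ?n then 1 else 0) * wv ns l c) \<noteq> 0" by auto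
  then obtain c where "(if b = min c ?n then 1 else 0) * wv ns l c \<noteq> 0"
    by (auto elim: sum.not_neutral_contains_not_neutral)
  then have "b = min c ?n" "wv ns l c \<noteq> 0" by (auto split: if_splits)
  moreover have "c \<le> mm ns l" using Suc.IH \<open>wv ns l c \<noteq> 0\<close> by blast
  ultimately have "b \<le> mm ns (Suc l)" by (auto simp: mm_Suc)
  with ab show ?case by simp
qed

lemma wv_pos: "wv ns l (mm ns l) > 0"
proof (induction l)
  case 0
  then show ?case by (simp add: mm_0)
next
  case (Suc l)
  let ?n = "ns (Suc l)"
  let ?b = "mm ns (Suc l)"
  let ?u = "\<lambda>b. (\<Sum>c<ns l+1. (if b = min c ?n then 1 else 0) * wv ns l c)"
  have bn: "?b \<le> ?n" by (rule mm_le)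
  have "(if ?b = min (mm ns l) ?n then 1 else 0) * wv ns l (mm ns l) \<le> ?u ?b"
    by (rule member_le_sum) (use mm_le[of ns l] in \<open>auto intro!: mult_nonneg_nonneg wv_nonneg\<close>)
  then have u: "?u ?b > 0" using Suc.IH by (simp add: mm_Suc)
  have c: "clip ?b (gammaV ?b ?n) ?b > 0" using B_pos[OF bn] by simp
  have "real (clip ?b (gammaV ?b ?n) ?b) * ?u ?b \<le>
     (\<Sum>b<?n+1. real (clip b (gammaV b ?n) ?b) * ?u b)"
    by (rule member_le_sum) (use bn in \<open>auto intro!: mult_nonneg_nonneg wv_nonneg sum_nonneg\<close>)
  moreover have "real (clip ?b (gammaV ?b ?n) ?b) * ?u ?b > 0" using u c by simp
  ultimately show ?case by simp
qed

definition T :: "(nat \<Rightarrow> nat) \<Rightarrow> nat \<Rightarrow> real" where "T ns l = (\<Sum>a<ns l+1. wv ns l a)"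

lemma T_pos: "T ns l > 0"
proof -
  have "wv ns l (mm ns l) \<le> T ns l" unfolding T_def
    by (rule member_le_sum) (use mm_le[of ns l] in \<open>auto intro: wv_nonneg\<close>)
  then show ?thesis using wv_pos[of ns l] by simp
qed

lemma T_step: "T ns (Suc l) = (\<Sum>c<ns l+1. wv ns l c * real (S (ns (Suc l)) (min c (ns (Suc l)))))"
proof -
  let ?n = "ns (Suc l)"
  let ?u = "\<lambda>b. (\<Sum>c<ns l+1. (if b = min c ?n then 1 else 0) * wv ns l c)"
  have "T ns (Suc l) = (\<Sum>a<?n+1. \<Sum>b<?n+1. real (clip b (gammaV b ?n) a) * ?u b)"
    by (simp add: T_def)
  also have "\<dots> = (\<Sum>b<?n+1. \<Sum>a<?n+1. real (clip b (gammaV b ?n) a) * ?u b)"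
    by (rule sum.swap)
  also have "\<dots> = (\<Sum>b<?n+1. real (\<Sum>a<?n+1. clip b (gammaV b ?n) a) * ?u b)"
    by (rule sum.cong) (simp_all add: sum_distrib_right)
  also have "\<dots> = (\<Sum>b<?n+1. real (S ?n b) * ?u b)"
    by (rule sum.cong[OF refl], subst B_colsum, simp_all)
  also have "\<dots> = (\<Sum>b<?n+1. \<Sum>c<ns l+1. (if b = min c ?n then wv ns l c * real (S ?n b) else 0))"
    by (rule sum.cong[OF refl], simp only: sum_distrib_left, rule sum.cong[OF refl], simp)
  also have "\<dots> = (\<Sum>c<ns l+1. \<Sum>b<?n+1. (if b = min c ?n then wv ns l c * real (S ?n b) else 0))"
    by (rule sum.swap)
  also have "\<dots> = (\<Sum>c<ns l+1. wv ns l c * real (S ?n (min c ?n)))"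
    by (rule sum.cong) (auto simp: sum.delta)
  finally show ?thesis .
qed

definition Good :: "(nat \<Rightarrow> nat) \<Rightarrow> nat \<Rightarrow> bool" where
  "Good ns l = (\<forall>c. wv ns l c > 0 \<longrightarrow> \<not> min c (ns (Suc l)) < mm ns (Suc l))"

lemma T_le: "T ns (Suc l) \<le> T ns l * real (S (ns (Suc l)) (mm ns l))"
  and T_less: "T ns (Suc l) < T ns l * real (S (ns (Suc l)) (mm ns l)) \<longleftrightarrow> \<not> Good ns l"
proof -
  let ?n = "ns (Suc l)"
  let ?f = "\<lambda>c. wv ns l c * real (S ?n (min c ?n))"
  let ?g = "\<lambda>c. wv ns l c * real (S ?n (mm ns l))"
  have eqT: "T ns (Suc l) = sum ?f {..<ns l+1}" by (rule T_step)
  have eqR: "T ns l * real (S ?n (mm ns l)) = sum ?g {..<ns l+1}"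
    by (simp add: T_def sum_distrib_right)
  have fg: "?f c \<le> ?g c" for c
  proof (cases "wv ns l c = 0")
    case False
    then have "c \<le> mm ns l" by (rule wv_supp)
    then have "S ?n c \<le> S ?n (mm ns l)" by (rule S_mono)
    then show ?thesis using S_min[of ?n c] wv_nonneg[of ns l c]
      by (simp add: mult_left_mono)
  qed simp
  have fg_less: "?f c < ?g c \<longleftrightarrow> wv ns l c > 0 \<and> min c ?n < mm ns (Suc l)" for c
  proof (cases "wv ns l c = 0")
    case False
    then have pos: "wv ns l c > 0" using wv_nonneg[of ns l c] by simp
    from False have cm: "c \<le> mm ns l" by (rule wv_supp)
    have "?f c < ?g c \<longleftrightarrow> S ?n c < S ?n (mm ns l)"
      using pos S_min[of ?n c] by simp
    also have "\<dots> \<longleftrightarrow> min c ?n < min (mm ns l) ?n" using S_cmp(2)[OF cm] by simp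
    finally show ?thesis using pos by (simp add: mm_Suc)
  qed simp
  show "T ns (Suc l) \<le> T ns l * real (S ?n (mm ns l))"
    unfolding eqT eqR by (rule sum_mono) (rule fg)
  show "T ns (Suc l) < T ns l * real (S ?n (mm ns l)) \<longleftrightarrow> \<not> Good ns l"
  proof
    assume "T ns (Suc l) < T ns l * real (S ?n (mm ns l))"
    then have lt: "sum ?f {..<ns l+1} < sum ?g {..<ns l+1}" using eqT eqR by simp
    show "\<not> Good ns l"
    proof
      assume G: "Good ns l"
      have "sum ?f {..<ns l+1} = sum ?g {..<ns l+1}"
      proof (rule sum.cong)
        fix c
        have "\<not> ?f c < ?g c" using G fg_less[of c] by (auto simp: Good_def)
        then show "?f c = ?g c" using fg[of c] by simp
      qed simp
      then show False using lt by simp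
    qed
  next
    assume "\<not> Good ns l"
    then obtain c where c: "wv ns l c > 0" "min c ?n < mm ns (Suc l)" by (auto simp: Good_def)
    then have "c \<le> mm ns l" using wv_supp[of ns l c] by simp
    then have cin: "c \<in> {..<ns l+1}" using mm_le[of ns l] by simp
    have "sum ?f {..<ns l+1} < sum ?g {..<ns l+1}"
      by (rule sum_strict_mono_ex1) (use fg fg_less c cin in auto)
    then show "T ns (Suc l) < T ns l * real (S ?n (mm ns l))" using eqT eqR by simp
  qed
qed

lemma Good_0: "Good ns 0"
  by (auto simp: Good_def mm_Suc mm_0 split: if_splits)

lemma arith_char:
  fixes n b n2 :: nat assumes "b \<le> n"
  shows "(\<forall>a. (a = b \<or> (a < b \<and> n - b \<le> a)) \<longrightarrow> \<not> min a n2 < min b n2)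
     \<longleftrightarrow> \<not> n < b + min b n2"
proof
  assume H: "\<forall>a. (a = b \<or> (a < b \<and> n - b \<le> a)) \<longrightarrow> \<not> min a n2 < min b n2"
  show "\<not> n < b + min b n2"
  proof
    assume "n < b + min b n2"
    then have "n - b < b" "n - b < n2" using assms by auto
    then show False using H[rule_format, of "n - b"] by auto
  qed
next
  assume "\<not> n < b + min b n2"
  then show "\<forall>a. (a = b \<or> (a < b \<and> n - b \<le> a)) \<longrightarrow> \<not> min a n2 < min b n2"
    using assms by auto
qed

lemma Good_Suc: assumes G: "Good ns j"
  shows "Good ns (Suc j) \<longleftrightarrow> \<not> ns (Suc j) < mm ns (Suc j) + mm ns (Suc (Suc j))"
proof -
  let ?n = "ns (Suc j)"
  let ?b = "mm ns (Suc j)"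
  let ?n2 = "ns (Suc (Suc j))"
  let ?u = "\<lambda>b. (\<Sum>c<ns j+1. (if b = min c ?n then 1 else 0) * wv ns j c)"
  have bn: "?b \<le> ?n" by (rule mm_le)
  have u0: "?u b' = 0" if "b' \<noteq> ?b" for b'
  proof (rule sum.neutral, rule ballI)
    fix c assume "c \<in> {..<ns j+1}"
    show "(if b' = min c ?n then 1 else 0) * wv ns j c = 0"
    proof (cases "wv ns j c = 0")
      case False
      then have pos: "wv ns j c > 0" using wv_nonneg[of ns j c] by simp
      have "c \<le> mm ns j" using False by (rule wv_supp)
      moreover have "\<not> min c ?n < ?b" using G pos by (auto simp: Good_def)
      ultimately have "min c ?n = ?b" by (auto simp: mm_Suc)
      then show ?thesis using that by simp
    qed simp
  qed
  have "(if ?b = min (mm ns j) ?n then 1 else 0) * wv ns j (mm ns j) \<le> ?u ?b"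
    by (rule member_le_sum) (use mm_le[of ns j] in \<open>auto intro!: mult_nonneg_nonneg wv_nonneg\<close>)
  then have upos: "?u ?b > 0" using wv_pos[of ns j] by (simp add: mm_Suc)
  have w: "wv ns (Suc j) a = real (clip ?b (gammaV ?b ?n) a) * ?u ?b" for a
  proof -
    have "wv ns (Suc j) a = (\<Sum>b<?n+1. real (clip b (gammaV b ?n) a) * ?u b)" by simp
    also have "\<dots> = (\<Sum>b<?n+1. if b = ?b then real (clip ?b (gammaV ?b ?n) a) * ?u ?b else 0)"
    proof (rule sum.cong[OF refl])
      fix x
      show "real (clip x (gammaV x ?n) a) * ?u x = (if x = ?b then real (clip ?b (gammaV ?b ?n) a) * ?u ?b else 0)"
      proof (cases "x = ?b")
        case False
        show ?thesis using u0[OF False] False by (simp only: if_False mult_zero_right)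
      qed simp
    qed
    also have "\<dots> = real (clip ?b (gammaV ?b ?n) a) * ?u ?b"
      using bn by (subst sum.delta) auto
    finally show ?thesis .
  qed
  have wp: "wv ns (Suc j) a > 0 \<longleftrightarrow> (a = ?b \<or> (a < ?b \<and> ?n - ?b \<le> a))" for a
    using w[of a] upos B_pos[OF bn, of a] by (simp add: zero_less_mult_iff)
  have "Good ns (Suc j) \<longleftrightarrow> (\<forall>a. (a = ?b \<or> (a < ?b \<and> ?n - ?b \<le> a)) \<longrightarrow> \<not> min a ?n2 < min ?b ?n2)"
    unfolding Good_def wp by (simp add: mm_Suc[of ns "Suc j"])
  also have "\<dots> \<longleftrightarrow> \<not> ?n < ?b + min ?b ?n2" by (rule arith_char[OF bn])
  finally show ?thesis by (simp add: mm_Suc[of ns "Suc j"])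
qed

lemma Good_all: "(\<forall>k<L. Good ns k) \<longleftrightarrow> \<not> (\<exists>l\<in>{1..L-1}. ns l < mm ns l + mm ns (Suc l))"
proof (induction L)
  case 0
  then show ?case by simp
next
  case (Suc L)
  show ?case
  proof (cases L)
    case 0
    then show ?thesis using Good_0 by auto
  next
    case (Suc j)
    have split1: "(\<forall>k<Suc L. Good ns k) \<longleftrightarrow> (\<forall>k<L. Good ns k) \<and> Good ns L"
      using less_Suc_eq by auto
    have split2: "(\<exists>l\<in>{1..Suc L-1}. ns l < mm ns l + mm ns (Suc l)) \<longleftrightarrow>
       (\<exists>l\<in>{1..L-1}. ns l < mm ns l + mm ns (Suc l)) \<or> ns L < mm ns L + mm ns (Suc L)"
    proof -
      have "{1..Suc L-1} = insert L {1..L-1}" using Suc by auto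
      then show ?thesis by auto
    qed
    show ?thesis
    proof (cases "\<forall>k<L. Good ns k")
      case True
      then have "Good ns j" using Suc by simp
      then show ?thesis using Good_Suc[of ns j] Suc.IH True split1 split2 \<open>L = Suc j\<close> by auto
    next
      case False
      then show ?thesis using Suc.IH split1 split2 by auto
    qed
  qed
qed

definition P :: "(nat \<Rightarrow> nat) \<Rightarrow> nat \<Rightarrow> real" where
  "P ns l = (\<Prod>k=1..l. real (S (ns k) (mm ns (k-1))))"

lemma P_Suc: "P ns (Suc l) = P ns l * real (S (ns (Suc l)) (mm ns l))"
  unfolding P_def by (subst prod.nat_ivl_Suc') auto

lemma TP: "T ns l \<le> P ns l \<and> (T ns l = P ns l \<longleftrightarrow> (\<forall>k<l. Good ns k))"
proof (induction l)
  case 0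
  then show ?case by (simp add: T_def P_def sum.lessThan_Suc mm_0)
next
  case (Suc l)
  define s where "s = real (S (ns (Suc l)) (mm ns l))"
  have s: "s > 0" using S_pos[of "ns (Suc l)" "mm ns l"] by (simp add: s_def)
  have a: "T ns (Suc l) \<le> T ns l * s" using T_le s_def by simp
  have a2: "T ns (Suc l) = T ns l * s \<longleftrightarrow> Good ns l" using T_less[of ns l] a s_def by auto
  have b: "T ns l * s \<le> P ns l * s" using Suc.IH s by simp
  have P: "P ns (Suc l) = P ns l * s" by (simp add: P_Suc s_def)
  have "T ns (Suc l) = P ns (Suc l) \<longleftrightarrow> T ns (Suc l) = T ns l * s \<and> T ns l = P ns l"
    using a b s P by auto
  then show ?case using a b P a2 Suc.IH less_Suc_eq by auto
qed

lemma binom_T: "binomBound ns L = T ns L"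
  unfolding binomBound_def chain_vec norm1_def T_def
  using wv_nonneg by simp

lemma mont_P: "real (montufarBound ns L) = P ns L"
proof -
  have "real (montufarBound ns L) = (\<Prod>l=1..L. real (\<Sum>j\<le>Min (ns ` {..<l}). ns l choose j))"
    unfolding montufarBound_def by simp
  also have "\<dots> = P ns L" unfolding P_def
  proof (rule prod.cong[OF refl])
    fix l assume "l \<in> {1..L}"
    then have "{..<l} = {..l-1}" by auto
    then show "real (\<Sum>j\<le>Min (ns ` {..<l}). ns l choose j) = real (S (ns l) (mm ns (l-1)))"
      by (simp add: S_def mm_def)
  qed
  finally show ?thesis .
qed

theorem mainTheorem12:
  fixes ns :: "nat \<Rightarrow> nat" and L :: nat
  assumes "L \<ge> 1" and "\<And>l. l \<le> L \<Longrightarrow> ns l \<ge> 1"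
  shows "binomBound ns L \<le> real (montufarBound ns L) \<and>
         (binomBound ns L < real (montufarBound ns L) \<longleftrightarrow>
           (\<exists>l\<in>{1..L-1}. ns l < Min (ns ` {..l}) + Min (ns ` {..Suc l})))"
proof -
  have e: "(\<exists>l\<in>{1..L-1}. ns l < Min (ns ` {..l}) + Min (ns ` {..Suc l}))
     \<longleftrightarrow> (\<exists>l\<in>{1..L-1}. ns l < mm ns l + mm ns (Suc l))" by (simp add: mm_def)
  show ?thesis unfolding binom_T mont_P e using TP[of ns L] Good_all[of L ns] by auto
qed

end
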